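(* Let $N>2$ be an odd positive integer, $K$ a positive integer, and $0<Z_x\le N$, $0<Z_y\le K$ integers. Let $f:\mathbb{Z}_N\to\mathbb{Z}_K$ be such that for all integers $a,b$ with $-Z_x<a<Z_x$, $a\ne0$, $-Z_y<b<Z_y$, the equation $f(x+a)-f(x)=b$ (with $x+a$ computed in $\mathbb{Z}_N$ and the equation in $\mathbb{Z}_K$) has at most one solution $x\in\mathbb{Z}_N$. For $0\le k<N$ let $\mathbf{a}_k=(a_k(0),\dots,a_k(K-1))$ with $a_k(t)=\omega_K^{tf(k)}$. Let $\mathbf{h}_0,\dots,\mathbf{h}_{N-1}$ be unimodular complex sequences of length $N$ such that for all $0\le i\ne j<N$ and all $0\le v<N$, $$\Big|\sum_{n=0}^{N-1}h_i(n)h_j^*(n)\Big|\le 1,\qquad \Big|\sum_{n=0}^{N-1}h_i(n)h_j^*(n)\omega_N^{nv}\Big|<N.$$ For $0\le i<N$ define $\mathbf{s}_i$ of length $NK$ by $s_i(tN+k)=h_i(k)a_k(t)$ for $0\le t<K$, $0\le k<N$, and let $\mathcal{S}=\{\mathbf{s}_0,\dots,\mathbf{s}_{N-1}\}$. Then $\mathcal{S}$ is an aperiodic $(N,NK,\Pi,K+Z_x-1)$-LAZ sequence set with $\Pi=(-Z_x,Z_x)\times(-Z_y,Z_y)$; that is, for all integers $(\tau,v)\in\Pi$: $|\hat{AF}_{\mathbf{s}_i}(\tau,v)|\le K+Z_x-1$ for every $i$ whenever $(\tau,v)\ne(0,0)$, and $|\hat{AF}_{\mathbf{s}_i,\mathbf{s}_j}(\tau,v)|\le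 K+Z_x-1$ for all $i\ne j$.
   Context: $\omega_L=e^{2\pi\sqrt{-1}/L}$, $z^*$ is complex conjugation, and a sequence is unimodular if all entries have modulus 1. For sequences $\mathbf{a},\mathbf{b}$ of length $L$, the aperiodic cross-ambiguity function is $\hat{AF}_{\mathbf{a},\mathbf{b}}(\tau,v)=\sum_{t=0}^{L-1-\tau}a(t)b^*(t+\tau)\omega_L^{vt}$ for $0\le\tau\le L-1$, $\hat{AF}_{\mathbf{a},\mathbf{b}}(\tau,v)=\sum_{t=-\tau}^{L-1}a(t)b^*(t+\tau)\omega_L^{vt}$ for $-L<\tau<0$, and $0$ for $|\tau|\ge L$; $\hat{AF}_{\mathbf{a}}=\hat{AF}_{\mathbf{a},\mathbf{a}}$. A set of $M$ sequences of length $L$ is an $(M,L,\Pi,\hat\theta)$-LAZ aperiodic sequence set if the maximum of $|\hat{AF}_{\mathbf{a}}(\tau,v)|$ over sequences in the set and $(0,0)\ne(\tau,v)\in\Pi$, and of $|\hat{AF}_{\mathbf{a},\mathbf{b}}(\tau,v)|$ over distinct $\mathbf{a},\mathbf{b}$ in the set and $(\tau,v)\in\Pi$, is $\hat\theta$ (here: at most $\hat\theta$). *)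

theory Defs
  imports "HOL-Analysis.Analysis"
begin

definition omega :: "nat \<Rightarrow> complex" where
  "omega L = exp (2 * pi * \<i> / of_nat L)"

text \<open>Aperiodic cross-ambiguity function of sequences a, b of length L
  (entries a(0),...,a(L-1); values outside are irrelevant).\<close>
definition aperiodic_AF :: "nat \<Rightarrow> (nat \<Rightarrow> complex) \<Rightarrow> (nat \<Rightarrow> complex) \<Rightarrow> int \<Rightarrow> int \<Rightarrow> complex" where
  "aperiodic_AF L a b \<tau> v =
     (if 0 \<le> \<tau> \<and> \<tau> < int L then
        (\<Sum>t\<in>{0..<L - nat \<tau>}. a t * cnj (b (t + nat \<tau>)) * omega L powi (v * int t))
      else if - int L < \<tau> \<and> \<tau> < 0 then
        (\<Sum>t\<in>{nat (- \<tau>)..<L}. a t * cnj (b (t - nat (- \<tau>))) * omega L powi (v * int t))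
      else 0)"

definition unimodular :: "nat \<Rightarrow> (nat \<Rightarrow> complex) \<Rightarrow> bool" where
  "unimodular L h \<longleftrightarrow> (\<forall>n<L. cmod (h n) = 1)"

text \<open>The sequences a_k(t) = omega_K^(t f(k)), with f(k) a representative in {0..<K}\<close>
definition seq_a :: "nat \<Rightarrow> (nat \<Rightarrow> nat) \<Rightarrow> nat \<Rightarrow> nat \<Rightarrow> complex" where
  "seq_a K f k t = omega K ^ (t * f k)"

definition seq_s :: "nat \<Rightarrow> nat \<Rightarrow> (nat \<Rightarrow> nat) \<Rightarrow> (nat \<Rightarrow> nat \<Rightarrow> complex) \<Rightarrow> nat \<Rightarrow> nat \<Rightarrow> complex" where
  "seq_s N K f h i n = h i (n mod N) * seq_a K f (n mod N) (n div N)"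

end

theory Submission imports Defs begin

lemma omega_nz: "omega L \<noteq> 0" by (simp add: omega_def)

lemma omega_powi: "omega L powi m = exp (of_int m * (2 * pi * \<i> / of_nat L))"
  by (simp add: omega_def exp_power_int)

lemma norm_omega_powi: "norm (omega L powi m) = 1"
  unfolding omega_powi by (simp add: norm_exp_eq_Re)

lemma norm_omega_pow: "norm (omega L ^ m) = 1"
  using norm_omega_powi[of L "int m"] by simp

lemma cnj_omega_powi: "cnj (omega L powi m) = omega L powi (- m)"
  unfolding omega_powi exp_cnj[symmetric] by (simp add: exp_cnj)

lemma omega_powi_add: "omega L powi (a + b) = omega L powi a * omega L powi b"
  by (simp add: power_int_add omega_nz)

lemma omega_powi_eq_1:
  assumes "L > 0" shows "omega L powi m = 1 \<longleftrightarrow> int L dvd m"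
proof
  assume "omega L powi m = 1"
  then obtain n where n: "Im (of_int m * (2 * pi * \<i> / of_nat L)) = real_of_int (2 * n) * pi"
    unfolding omega_powi exp_eq_1 by blast
  have "Im (of_int m * (2 * pi * \<i> / of_nat L)) = 2 * pi * m / L"
    by simp
  with n have "2 * pi * m / L = 2 * n * pi" by simp
  hence "real_of_int m = real_of_int n * real L" using assms by (simp add: field_simps)
  hence "m = n * int L" by (metis of_int_eq_iff of_int_mult of_int_of_nat_eq)
  thus "int L dvd m" by simp
next
  assume "int L dvd m"
  then obtain n where "m = int L * n" by blast
  hence "of_int m * (2 * pi * \<i> / of_nat L) = \<i> * (complex_of_int n * (complex_of_real pi * 2))"
    using assms by (simp add: field_simps)
  thus "omega L powi m = 1" unfolding omega_powi by (simp add: exp_2pi_1_int)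
qed

lemma omega_pow_N: "N > 0 \<Longrightarrow> omega (N * K) ^ N = omega K"
  unfolding omega_def exp_of_nat_mult[symmetric] by (simp add: field_simps)

lemma omega_K_powi: "N > 0 \<Longrightarrow> omega K powi m = omega (N * K) powi (int N * m)"
proof -
  assume N: "N > 0"
  have "omega K = omega (N * K) powi int N" using omega_pow_N[OF N] by (simp add: power_int_of_nat)
  hence "omega K powi m = (omega (N * K) powi int N) powi m" by simp
  also have "\<dots> = omega (N * K) powi (int N * m)" by (metis power_int_mult)
  finally show ?thesis .
qed

lemma omega_K_pow: "N > 0 \<Longrightarrow> omega K ^ m = omega (N * K) powi (int N * int m)"
  using omega_K_powi[of N K "int m"] by simp

lemma geo_full:
  assumes "K > 0" "\<not> int K dvd e"
  shows "(\<Sum>t<K. (omega K powi e) ^ t) = 0"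
proof -
  have "omega K powi e \<noteq> 1" using assms omega_powi_eq_1 by blast
  moreover have "(omega K powi e) ^ K = 1"
  proof -
    have "(omega K powi e) ^ K = (omega K powi e) powi int K" by (metis power_int_of_nat)
    also have "\<dots> = omega K powi (e * int K)" by (metis power_int_mult)
    also have "\<dots> = 1" using assms(1) omega_powi_eq_1 by simp
    finally show ?thesis .
  qed
  ultimately show ?thesis by (simp add: sum_gp_strict)
qed

lemma geo_part:
  assumes "K > 0" "\<not> int K dvd e"
  shows "norm (\<Sum>t\<in>{..<K - 1}. (omega K powi e) ^ t) = 1"
proof -
  have "K = Suc (K - 1)" using assms by simp
  hence "(\<Sum>t<K. (omega K powi e) ^ t) = (\<Sum>t\<in>{..<K - 1}. (omega K powi e) ^ t) + (omega K powi e) ^ (K - 1)"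
    by (metis sum.lessThan_Suc)
  with geo_full[OF assms] have "(\<Sum>t\<in>{..<K - 1}. (omega K powi e) ^ t) = - ((omega K powi e) ^ (K - 1))"
    by (simp add: add_eq_0_iff)
  thus ?thesis by (simp add: norm_power norm_omega_powi)
qed

lemma sum_split_NK:
  fixes G :: "nat \<Rightarrow> 'a::comm_monoid_add"
  shows "(\<Sum>n<N * K. G n) = (\<Sum>k<N. \<Sum>t<K. G (t * N + k))"
proof (induction K)
  case 0 thus ?case by simp
next
  case (Suc K)
  have "(\<Sum>n<N * Suc K. G n) = (\<Sum>n<N * K. G n) + (\<Sum>n\<in>{N*K..<N*K + N}. G n)"
    by (simp add: sum.atLeastLessThan_concat[symmetric] lessThan_atLeast0 add.commute)
  also have "(\<Sum>n\<in>{N*K..<N*K + N}. G n) = (\<Sum>k<N. G (K * N + k))"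
    using sum.shift_bounds_nat_ivl[of G 0 "N*K" N] by (simp add: lessThan_atLeast0 mult.commute add.commute)
  finally show ?case using Suc by (simp add: sum.distrib)
qed


definition kp :: "nat \<Rightarrow> nat \<Rightarrow> nat \<Rightarrow> nat" where
  "kp N \<tau> k = (k + \<tau>) mod N"
definition ee :: "nat \<Rightarrow> (nat \<Rightarrow> nat) \<Rightarrow> nat \<Rightarrow> int \<Rightarrow> nat \<Rightarrow> int" where
  "ee N f \<tau> v k = int (f k) - int (f (kp N \<tau> k)) + v"
definition CC :: "nat \<Rightarrow> nat \<Rightarrow> (nat \<Rightarrow> nat) \<Rightarrow> (nat \<Rightarrow> nat \<Rightarrow> complex) \<Rightarrow> nat \<Rightarrow> nat \<Rightarrow> nat \<Rightarrow> int \<Rightarrow> nat \<Rightarrow> complex" where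
  "CC N K f h i j \<tau> v k = h i k * cnj (h j (kp N \<tau> k)) * omega (N * K) powi (v * int k) *
     (if k + \<tau> < N then 1 else omega K powi (- int (f (kp N \<tau> k))))"
definition TT :: "nat \<Rightarrow> nat \<Rightarrow> nat \<Rightarrow> nat \<Rightarrow> nat set" where
  "TT N K \<tau> k = (if k + \<tau> < N then {..<K} else {..<K - 1})"

lemma seq_s_at:
  assumes "k < N"
  shows "seq_s N K f h i (t * N + k) = h i k * omega (N * K) powi (int N * (int t * int (f k)))"
proof -
  have N: "N > 0" using assms by simp
  have "(t * N + k) mod N = k" using assms by simp
  moreover have "(t * N + k) div N = t" using assms by simp
  ultimately show ?thesis unfolding seq_s_def seq_a_def using omega_K_pow[OF N, of K "t * f k"] by simp
qed

lemma ac1: "x * y * w = c * d \<Longrightarrow> (a::complex) * x * (b * y) * w = a * b * c * 1 * d"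
proof -
  assume H: "x * y * w = c * d"
  have "a * x * (b * y) * w = a * b * (x * y * w)" by (simp add: mult_ac)
  also have "\<dots> = a * b * (c * d)" by (simp add: H)
  finally show ?thesis by (simp add: mult_ac)
qed

lemma ac2: "x * y * w = c * g * d \<Longrightarrow> (a::complex) * x * (b * y) * w = a * b * c * g * d"
proof -
  assume H: "x * y * w = c * g * d"
  have "a * x * (b * y) * w = a * b * (x * y * w)" by (simp add: mult_ac)
  also have "\<dots> = a * b * (c * g * d)" by (simp add: H)
  finally show ?thesis by (simp add: mult_ac)
qed

lemma term_eq:
  assumes "\<tau> < N" "k < N" "t \<in> TT N K \<tau> k"
  shows "seq_s N K f h i (t * N + k) * cnj (seq_s N K f h j (t * N + k + \<tau>)) * omega (N * K) powi (v * int (t * N + k))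
     = CC N K f h i j \<tau> v k * (omega K powi ee N f \<tau> v k) ^ t"
proof -
  have N: "N > 0" using assms by simp
  define z where "z = omega (N * K)"
  have cz: "cnj (z powi a) = z powi (- a)" for a unfolding z_def by (rule cnj_omega_powi)
  have zadd: "z powi (a + b) = z powi a * z powi b" for a b unfolding z_def by (rule omega_powi_add)
  have pw: "(omega K powi e) ^ t = z powi (int N * (e * int t))" for e
  proof -
    have "(omega K powi e) ^ t = (omega K powi e) powi int t" by (metis power_int_of_nat)
    also have "\<dots> = omega K powi (e * int t)" by (metis power_int_mult)
    finally show ?thesis unfolding z_def using omega_K_powi[OF N] by simp
  qed
  show ?thesis
  proof (cases "k + \<tau> < N")
    case True
    hence kp: "kp N \<tau> k = k + \<tau>" by (simp add: kp_def)
    have sj: "seq_s N K f h j (t * N + k + \<tau>) = h j (k + \<tau>) * z powi (int N * (int t * int (f (k + \<tau>))))"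
      using seq_s_at[OF True, of K f h j t] unfolding z_def by (simp add: add.assoc)
    have ex: "z powi (int N * (int t * int (f k))) * z powi (- (int N * (int t * int (f (k + \<tau>))))) * z powi (v * int (t * N + k))
        = z powi (v * int k) * z powi (int N * (ee N f \<tau> v k * int t))"
      unfolding zadd[symmetric] ee_def kp by (rule arg_cong[where f="\<lambda>x. z powi x"]) (simp add: algebra_simps)
    show ?thesis
      unfolding seq_s_at[OF assms(2)] sj pw CC_def z_def[symmetric] kp if_P[OF True] complex_cnj_mult cz
      by (rule ac1[OF ex])
  next
    case False
    hence kp: "kp N \<tau> k = k + \<tau> - N" using assms by (simp add: kp_def le_mod_geq)
    have lt: "k + \<tau> - N < N" using assms by simp
    have eq: "t * N + k + \<tau> = Suc t * N + (k + \<tau> - N)" using False by simp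
    have sj: "seq_s N K f h j (t * N + k + \<tau>) = h j (k + \<tau> - N) * z powi (int N * (int (Suc t) * int (f (k + \<tau> - N))))"
      unfolding eq using seq_s_at[OF lt, of K f h j "Suc t"] unfolding z_def by simp
    have ex: "z powi (int N * (int t * int (f k))) * z powi (- (int N * (int (Suc t) * int (f (k + \<tau> - N))))) * z powi (v * int (t * N + k))
        = z powi (v * int k) * z powi (int N * (- int (f (k + \<tau> - N)))) * z powi (int N * (ee N f \<tau> v k * int t))"
      unfolding zadd[symmetric] ee_def kp by (rule arg_cong[where f="\<lambda>x. z powi x"]) (simp add: algebra_simps)
    show ?thesis
      unfolding seq_s_at[OF assms(2)] sj pw CC_def z_def[symmetric] kp if_not_P[OF False] complex_cnj_mult cz
        omega_K_powi[OF N, of K "- int (f (k + \<tau> - N))"] z_def[symmetric]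
      by (rule ac2[OF ex])
  qed
qed


lemma TT_char:
  assumes "k < N" "\<tau> < N" "t < K"
  shows "t * N + k + \<tau> < N * K \<longleftrightarrow> t \<in> TT N K \<tau> k"
proof (cases "k + \<tau> < N")
  case True
  have "Suc t * N \<le> K * N" using assms by (intro mult_le_mono1) simp
  thus ?thesis using True assms by (simp add: TT_def mult.commute)
next
  case False
  show ?thesis
  proof (cases "t < K - 1")
    case True
    have "Suc (Suc t) * N \<le> K * N" using True by (intro mult_le_mono1) simp
    thus ?thesis using True False assms by (simp add: TT_def mult.commute)
  next
    case F2: False
    hence "Suc t = K" using assms by simp
    hence "K * N = t * N + N" by (metis mult_Suc add.commute)
    thus ?thesis using F2 False assms by (simp add: TT_def mult.commute)
  qed
qed

lemma AF_decomp:
  assumes N: "N > 0" and K: "K > 0" and tau: "\<tau> < N"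
  shows "aperiodic_AF (N * K) (seq_s N K f h i) (seq_s N K f h j) (int \<tau>) v =
    (\<Sum>k<N. CC N K f h i j \<tau> v k * (\<Sum>t\<in>TT N K \<tau> k. (omega K powi ee N f \<tau> v k) ^ t))"
proof -
  define g where "g n = seq_s N K f h i n * cnj (seq_s N K f h j (n + \<tau>)) * omega (N * K) powi (v * int n)" for n
  have "N \<le> N * K" using K by simp
  hence NK: "\<tau> < N * K" using tau by linarith
  hence NK': "int \<tau> < int N * int K" by (metis of_nat_less_iff of_nat_mult)
  have "aperiodic_AF (N * K) (seq_s N K f h i) (seq_s N K f h j) (int \<tau>) v = (\<Sum>n\<in>{0..<N * K - \<tau>}. g n)"
    unfolding aperiodic_AF_def g_def using NK NK' by simp
  also have "\<dots> = (\<Sum>n<N * K. if n < N * K - \<tau> then g n else 0)"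
  proof -
    have "{0..<N * K - \<tau>} = {n \<in> {..<N * K}. n < N * K - \<tau>}" by auto
    thus ?thesis by (simp only: sum.inter_filter[OF finite_lessThan])
  qed
  also have "\<dots> = (\<Sum>k<N. \<Sum>t<K. if t * N + k < N * K - \<tau> then g (t * N + k) else 0)"
    by (rule sum_split_NK)
  also have "\<dots> = (\<Sum>k<N. \<Sum>t\<in>TT N K \<tau> k. g (t * N + k))"
  proof (rule sum.cong[OF refl])
    fix k assume k: "k \<in> {..<N}"
    have TTeq: "{t \<in> {..<K}. t * N + k < N * K - \<tau>} = TT N K \<tau> k"
    proof -
      have "t * N + k < N * K - \<tau> \<longleftrightarrow> t * N + k + \<tau> < N * K" for t using NK by linarith
      moreover have "TT N K \<tau> k \<subseteq> {..<K}" by (auto simp: TT_def)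
      ultimately show ?thesis using TT_char[of k N \<tau>] k tau by auto
    qed
    have "(\<Sum>t<K. if t * N + k < N * K - \<tau> then g (t * N + k) else 0) = (\<Sum>t\<in>{t \<in> {..<K}. t * N + k < N * K - \<tau>}. g (t * N + k))"
      by (rule sum.inter_filter[symmetric]) simp
    thus "(\<Sum>t<K. if t * N + k < N * K - \<tau> then g (t * N + k) else 0) = (\<Sum>t\<in>TT N K \<tau> k. g (t * N + k))"
      by (simp only: TTeq)
  qed
  also have "\<dots> = (\<Sum>k<N. \<Sum>t\<in>TT N K \<tau> k. CC N K f h i j \<tau> v k * (omega K powi ee N f \<tau> v k) ^ t)"
  proof (intro sum.cong refl)
    fix k t assume k: "k \<in> {..<N}" and t: "t \<in> TT N K \<tau> k"
    show "g (t * N + k) = CC N K f h i j \<tau> v k * (omega K powi ee N f \<tau> v k) ^ t"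
      unfolding g_def using term_eq[OF tau _ t] k by (simp only: lessThan_iff add.assoc)
  qed
  also have "\<dots> = (\<Sum>k<N. CC N K f h i j \<tau> v k * (\<Sum>t\<in>TT N K \<tau> k. (omega K powi ee N f \<tau> v k) ^ t))"
    by (simp add: sum_distrib_left)
  finally show ?thesis .
qed


definition bnd :: "nat \<Rightarrow> nat \<Rightarrow> (nat \<Rightarrow> nat) \<Rightarrow> nat \<Rightarrow> int \<Rightarrow> nat \<Rightarrow> real" where
  "bnd N K f \<tau> v k = (if int K dvd ee N f \<tau> v k then real K else if k + \<tau> < N then 0 else 1)"

lemma norm_CC:
  assumes "k < N" "\<forall>n<N. cmod (h i n) = 1" "\<forall>n<N. cmod (h j n) = 1"
  shows "norm (CC N K f h i j \<tau> v k) = 1"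
proof -
  have "kp N \<tau> k < N" using assms(1) by (simp add: kp_def)
  thus ?thesis using assms unfolding CC_def by (simp add: norm_mult norm_omega_powi)
qed

lemma norm_S:
  assumes "K > 0"
  shows "norm (\<Sum>t\<in>TT N K \<tau> k. (omega K powi e) ^ t) \<le> (if int K dvd e then real K else if k + \<tau> < N then 0 else 1)"
proof (cases "int K dvd e")
  case True
  have "norm (\<Sum>t\<in>TT N K \<tau> k. (omega K powi e) ^ t) \<le> (\<Sum>t\<in>TT N K \<tau> k. norm ((omega K powi e) ^ t))"
    by (rule norm_sum)
  also have "\<dots> = real (card (TT N K \<tau> k))" by (simp add: norm_power norm_omega_powi)
  also have "\<dots> \<le> real K" by (simp add: TT_def)
  finally show ?thesis using True by simp
next
  case False
  show ?thesis
  proof (cases "k + \<tau> < N")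
    case True
    thus ?thesis using False geo_full[OF assms False] by (simp add: TT_def)
  next
    case F2: False
    thus ?thesis using False geo_part[OF assms False] by (simp add: TT_def)
  qed
qed

lemma AF_bnd:
  assumes N: "N > 0" and K: "K > 0" and tau: "\<tau> < N"
    and hi: "\<forall>n<N. cmod (h i n) = 1" and hj: "\<forall>n<N. cmod (h j n) = 1"
  shows "cmod (aperiodic_AF (N * K) (seq_s N K f h i) (seq_s N K f h j) (int \<tau>) v) \<le> (\<Sum>k<N. bnd N K f \<tau> v k)"
proof -
  have "cmod (aperiodic_AF (N * K) (seq_s N K f h i) (seq_s N K f h j) (int \<tau>) v)
     \<le> (\<Sum>k<N. norm (CC N K f h i j \<tau> v k * (\<Sum>t\<in>TT N K \<tau> k. (omega K powi ee N f \<tau> v k) ^ t)))"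
    unfolding AF_decomp[OF N K tau] by (rule norm_sum)
  also have "\<dots> \<le> (\<Sum>k<N. bnd N K f \<tau> v k)"
  proof (rule sum_mono)
    fix k assume "k \<in> {..<N}"
    hence "norm (CC N K f h i j \<tau> v k) = 1" using norm_CC hi hj by simp
    thus "norm (CC N K f h i j \<tau> v k * (\<Sum>t\<in>TT N K \<tau> k. (omega K powi ee N f \<tau> v k) ^ t)) \<le> bnd N K f \<tau> v k"
      unfolding bnd_def using norm_S[OF K, where N=N and \<tau>=\<tau> and k=k and e="ee N f \<tau> v k"] by (simp add: norm_mult)
  qed
  finally show ?thesis .
qed

lemma sum_bnd:
  assumes tau: "\<tau> \<le> N"
  shows "(\<Sum>k<N. bnd N K f \<tau> v k) \<le> real K * real (card {k \<in> {..<N}. int K dvd ee N f \<tau> v k}) + real \<tau>"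
proof -
  have "(\<Sum>k<N. bnd N K f \<tau> v k) \<le> (\<Sum>k<N. (if int K dvd ee N f \<tau> v k then real K else 0) + (if k + \<tau> < N then 0 else 1))"
    by (rule sum_mono) (simp add: bnd_def)
  also have "\<dots> = (\<Sum>k<N. (if int K dvd ee N f \<tau> v k then real K else 0)) + (\<Sum>k<N. (if k + \<tau> < N then 0 else 1))"
    by (rule sum.distrib)
  also have "(\<Sum>k<N. (if int K dvd ee N f \<tau> v k then real K else 0)) = real K * real (card {k \<in> {..<N}. int K dvd ee N f \<tau> v k})"
    by (simp add: sum.inter_filter[symmetric])
  also have "(\<Sum>k<N. (if k + \<tau> < N then 0 else 1::real)) = (\<Sum>k<N. (if \<not> k + \<tau> < N then 1 else 0))"
    by (rule sum.cong) auto
  also have "\<dots> = real (card {k \<in> {..<N}. \<not> k + \<tau> < N})"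
    by (simp add: sum.inter_filter[symmetric])
  also have "{k \<in> {..<N}. \<not> k + \<tau> < N} = {N - \<tau>..<N}" using tau by auto
  finally show ?thesis by simp
qed


lemma AF_reflect:
  assumes "0 < \<tau>" "\<tau> < L"
  shows "aperiodic_AF L a b (- int \<tau>) v = omega L powi (v * int \<tau>) * cnj (aperiodic_AF L b a (int \<tau>) (- v))"
proof -
  have L: "aperiodic_AF L a b (- int \<tau>) v = (\<Sum>t\<in>{\<tau>..<L}. a t * cnj (b (t - \<tau>)) * omega L powi (v * int t))"
    unfolding aperiodic_AF_def using assms by simp
  have R: "aperiodic_AF L b a (int \<tau>) (- v) = (\<Sum>t\<in>{0..<L - \<tau>}. b t * cnj (a (t + \<tau>)) * omega L powi (- v * int t))"
    unfolding aperiodic_AF_def using assms by simp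
  have "{\<tau>..<L} = {0 + \<tau>..<(L - \<tau>) + \<tau>}" using assms by simp
  hence "(\<Sum>t\<in>{\<tau>..<L}. a t * cnj (b (t - \<tau>)) * omega L powi (v * int t))
      = (\<Sum>m\<in>{0..<L - \<tau>}. a (m + \<tau>) * cnj (b (m + \<tau> - \<tau>)) * omega L powi (v * int (m + \<tau>)))"
    by (simp only: sum.shift_bounds_nat_ivl)
  also have "\<dots> = (\<Sum>m\<in>{0..<L - \<tau>}. omega L powi (v * int \<tau>) * cnj (b m * cnj (a (m + \<tau>)) * omega L powi (- v * int m)))"
  proof (rule sum.cong[OF refl])
    fix m
    have "omega L powi (v * int (m + \<tau>)) = omega L powi (v * int \<tau>) * omega L powi (v * int m)"
      by (simp add: omega_powi_add[symmetric] algebra_simps)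
    thus "a (m + \<tau>) * cnj (b (m + \<tau> - \<tau>)) * omega L powi (v * int (m + \<tau>)) =
        omega L powi (v * int \<tau>) * cnj (b m * cnj (a (m + \<tau>)) * omega L powi (- v * int m))"
    proof -
      assume e: "omega L powi (v * int (m + \<tau>)) = omega L powi (v * int \<tau>) * omega L powi (v * int m)"
      have c: "cnj (omega L powi (- v * int m)) = omega L powi (v * int m)"
        unfolding cnj_omega_powi by simp
      show ?thesis unfolding complex_cnj_mult complex_cnj_cnj c add_diff_cancel_right' e by (simp only: mult_ac)
    qed
  qed
  also have "\<dots> = omega L powi (v * int \<tau>) * cnj (\<Sum>m\<in>{0..<L - \<tau>}. b m * cnj (a (m + \<tau>)) * omega L powi (- v * int m))"
    by (simp add: sum_distrib_left cnj_sum)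
  finally show ?thesis using L R by simp
qed

lemma AF_reflect_norm:
  assumes "0 < \<tau>" "\<tau> < L"
  shows "cmod (aperiodic_AF L a b (- int \<tau>) v) = cmod (aperiodic_AF L b a (int \<tau>) (- v))"
  unfolding AF_reflect[OF assms] by (simp add: norm_mult norm_omega_powi)

lemma fdiff_set:
  assumes K: "K > 0" and N: "N > 0"
  shows "{x \<in> {0..<N}. (int (f (nat ((int x + int \<tau>) mod int N))) - int (f x)) mod int K = v mod int K}
       = {k \<in> {..<N}. int K dvd ee N f \<tau> v k}"
proof -
  have 1: "nat ((int x + int \<tau>) mod int N) = kp N \<tau> x" for x
    unfolding kp_def by (metis nat_int of_nat_add of_nat_mod)
  have 2: "(A - B) mod int K = v mod int K \<longleftrightarrow> int K dvd (B - A + v)" for A B :: int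
  proof -
    have "(A - B) mod int K = v mod int K \<longleftrightarrow> int K dvd (A - B - v)" by (rule mod_eq_dvd_iff)
    also have "\<dots> \<longleftrightarrow> int K dvd - (A - B - v)" by (rule dvd_minus_iff[symmetric])
    finally show ?thesis by (simp add: algebra_simps)
  qed
  show ?thesis unfolding 1 2 ee_def by auto
qed

theorem theorem2:
  fixes N K Zx Zy :: nat
    and f :: "nat \<Rightarrow> nat"
    and h :: "nat \<Rightarrow> nat \<Rightarrow> complex"
  assumes N_gt: "N > 2" and N_odd: "odd N" and K_pos: "K > 0"
    and Zx: "0 < Zx" "Zx \<le> N" and Zy: "0 < Zy" "Zy \<le> K"
    and f_range: "\<forall>x<N. f x < K"
    and f_diff: "\<forall>a b. - int Zx < a \<and> a < int Zx \<and> a \<noteq> 0 \<and> - int Zy < b \<and> b < int Zy \<longrightarrow>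
        card {x \<in> {0..<N}. (int (f (nat ((int x + a) mod int N))) - int (f x)) mod int K = b mod int K} \<le> 1"
    and h_unimod: "\<forall>i<N. unimodular N (h i)"
    and h_corr: "\<forall>i<N. \<forall>j<N. i \<noteq> j \<longrightarrow> cmod (\<Sum>n<N. h i n * cnj (h j n)) \<le> 1"
    and h_dopp: "\<forall>i<N. \<forall>j<N. i \<noteq> j \<longrightarrow> (\<forall>v<N.
        cmod (\<Sum>n<N. h i n * cnj (h j n) * omega N ^ (n * v)) < real N)"
  shows "(\<forall>i<N. \<forall>\<tau> v. - int Zx < \<tau> \<and> \<tau> < int Zx \<and> - int Zy < v \<and> v < int Zy \<and> (\<tau>, v) \<noteq> (0, 0) \<longrightarrow>
            cmod (aperiodic_AF (N * K) (seq_s N K f h i) (seq_s N K f h i) \<tau> v) \<le> real (K + Zx - 1))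
       \<and> (\<forall>i<N. \<forall>j<N. i \<noteq> j \<longrightarrow> (\<forall>\<tau> v. - int Zx < \<tau> \<and> \<tau> < int Zx \<and> - int Zy < v \<and> v < int Zy \<longrightarrow>
            cmod (aperiodic_AF (N * K) (seq_s N K f h i) (seq_s N K f h j) \<tau> v) \<le> real (K + Zx - 1)))"
proof -
  have N0: "N > 0" using N_gt by simp
  have hu: "\<forall>n<N. cmod (h i n) = 1" if "i < N" for i
    using h_unimod that unfolding unimodular_def by blast
  have pos: "cmod (aperiodic_AF (N * K) (seq_s N K f h i) (seq_s N K f h j) (int \<tau>) v) \<le> real (K + Zx - 1)"
    if ij: "i < N" "j < N" and t: "0 < \<tau>" "\<tau> < Zx" and vv: "- int Zy < v" "v < int Zy" for i j \<tau> v
  proof -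
    have tN: "\<tau> < N" using t Zx by simp
    have "card {x \<in> {0..<N}. (int (f (nat ((int x + int \<tau>) mod int N))) - int (f x)) mod int K = v mod int K} \<le> 1"
      using f_diff t vv by simp
    hence card: "card {k \<in> {..<N}. int K dvd ee N f \<tau> v k} \<le> 1"
      unfolding fdiff_set[OF K_pos N0] .
    have "cmod (aperiodic_AF (N * K) (seq_s N K f h i) (seq_s N K f h j) (int \<tau>) v) \<le> (\<Sum>k<N. bnd N K f \<tau> v k)"
      by (rule AF_bnd[OF N0 K_pos tN hu[OF ij(1)] hu[OF ij(2)]])
    also have "\<dots> \<le> real K * real (card {k \<in> {..<N}. int K dvd ee N f \<tau> v k}) + real \<tau>"
      using tN by (intro sum_bnd) simp
    also have "\<dots> \<le> real K * 1 + real \<tau>"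
      using card by (intro add_right_mono mult_left_mono) auto
    also have "\<dots> \<le> real (K + Zx - 1)" using t by simp
    finally show ?thesis .
  qed
  have zero: "cmod (aperiodic_AF (N * K) (seq_s N K f h i) (seq_s N K f h j) 0 v) \<le> 0"
    if ij: "i < N" "j < N" and vv: "v \<noteq> 0" "- int K < v" "v < int K" for i j v
  proof -
    have nd: "\<not> int K dvd v"
    proof
      assume d: "int K dvd v"
      show False
      proof (cases "v > 0")
        case True thus False using zdvd_imp_le[OF d True] vv by simp
      next
        case False
        hence "- v > 0" using vv by simp
        moreover have "int K dvd - v" using d by simp
        ultimately show False using zdvd_imp_le vv by fastforce
      qed
    qed
    have "cmod (aperiodic_AF (N * K) (seq_s N K f h i) (seq_s N K f h j) (int 0) v) \<le> (\<Sum>k<N. bnd N K f 0 v k)"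
      by (rule AF_bnd[OF N0 K_pos N0 hu[OF ij(1)] hu[OF ij(2)]])
    also have "(\<Sum>k<N. bnd N K f 0 v k) = 0"
      by (rule sum.neutral) (simp add: bnd_def ee_def kp_def nd)
    finally show ?thesis by simp
  qed
  have corr: "cmod (aperiodic_AF (N * K) (seq_s N K f h i) (seq_s N K f h j) 0 0) \<le> real K"
    if ij: "i < N" "j < N" "i \<noteq> j" for i j
  proof -
    have "aperiodic_AF (N * K) (seq_s N K f h i) (seq_s N K f h j) (int 0) 0 = (\<Sum>k<N. h i k * cnj (h j k) * of_nat K)"
      unfolding AF_decomp[OF N0 K_pos N0] by (intro sum.cong refl) (simp add: CC_def kp_def ee_def TT_def)
    also have "\<dots> = of_nat K * (\<Sum>k<N. h i k * cnj (h j k))"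
      by (simp add: sum_distrib_left mult_ac)
    finally have "cmod (aperiodic_AF (N * K) (seq_s N K f h i) (seq_s N K f h j) 0 0) = real K * cmod (\<Sum>k<N. h i k * cnj (h j k))"
      by (simp add: norm_mult)
    also have "\<dots> \<le> real K * 1" using h_corr ij by (intro mult_left_mono) auto
    finally show ?thesis by simp
  qed
  have gen: "cmod (aperiodic_AF (N * K) (seq_s N K f h i) (seq_s N K f h j) \<tau> v) \<le> real (K + Zx - 1)"
    if ij: "i < N" "j < N" and t: "- int Zx < \<tau>" "\<tau> < int Zx" and vv: "- int Zy < v" "v < int Zy"
      and nz: "(\<tau>, v) \<noteq> (0, 0) \<or> i \<noteq> j" for i j \<tau> v
  proof (cases "\<tau> > 0")
    case True
    hence e: "\<tau> = int (nat \<tau>)" by simp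
    show ?thesis using pos[OF ij, of "nat \<tau>" v] True t vv by (subst e) simp
  next
    case False
    show ?thesis
    proof (cases "\<tau> = 0")
      case True
      show ?thesis
      proof (cases "v = 0")
        case True
        hence "i \<noteq> j" using nz \<open>\<tau> = 0\<close> by simp
        moreover have "real K \<le> real (K + Zx - 1)" using Zx by simp
        ultimately show ?thesis using corr[OF ij] True \<open>\<tau> = 0\<close> by (meson order.trans)
      next
        case False
        have "cmod (aperiodic_AF (N * K) (seq_s N K f h i) (seq_s N K f h j) 0 v) \<le> 0"
          using zero[OF ij False] vv Zy by simp
        thus ?thesis using \<open>\<tau> = 0\<close> by simp
      qed
    next
      case F2: False
      define \<sigma> where "\<sigma> = nat (- \<tau>)"
      have e: "\<tau> = - int \<sigma>" and s0: "0 < \<sigma>" and s1: "\<sigma> < Zx" using False F2 t by (auto simp: \<sigma>_def)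
      have "N \<le> N * K" using K_pos by simp
      hence sNK: "\<sigma> < N * K" using s1 Zx by linarith
      have "cmod (aperiodic_AF (N * K) (seq_s N K f h i) (seq_s N K f h j) \<tau> v)
           = cmod (aperiodic_AF (N * K) (seq_s N K f h j) (seq_s N K f h i) (int \<sigma>) (- v))"
        unfolding e by (rule AF_reflect_norm[OF s0 sNK])
      also have "\<dots> \<le> real (K + Zx - 1)" using pos[OF ij(2) ij(1) s0 s1] vv by simp
      finally show ?thesis .
    qed
  qed
  show ?thesis
  proof (intro conjI allI impI)
    fix i \<tau> v assume "i < N" and H: "- int Zx < \<tau> \<and> \<tau> < int Zx \<and> - int Zy < v \<and> v < int Zy \<and> (\<tau>, v) \<noteq> (0, 0)"
    thus "cmod (aperiodic_AF (N * K) (seq_s N K f h i) (seq_s N K f h i) \<tau> v) \<le> real (K + Zx - 1)"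
      using gen[of i i \<tau> v] by blast
  next
    fix i j \<tau> v assume "i < N" "j < N" "i \<noteq> j" and H: "- int Zx < \<tau> \<and> \<tau> < int Zx \<and> - int Zy < v \<and> v < int Zy"
    thus "cmod (aperiodic_AF (N * K) (seq_s N K f h i) (seq_s N K f h j) \<tau> v) \<le> real (K + Zx - 1)"
      using gen[of i j \<tau> v] by blast
  qed
qed

end
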